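(* Let $X$ be convex and let $f$ be $\alpha$-robustly quasiconvex for some $\alpha>0$, with $X\subset\operatorname{dom}f$. If $X^\infty\cap\mathcal{K}_q(f)=\{0\}$, then there exists $\varepsilon>0$ such that for all $u\in\mathbb{B}_\varepsilon$: (a) $f_u$ is bounded from below on $X$; (b) $\mathrm{Sol}(u)$ is nonempty and compact. Moreover, (c) $\operatorname{Lim\,sup}_{u\to0}\mathrm{Sol}(u)\subset\mathrm{Sol}(0)$ and (d) $\mathrm{Sol}(\cdot)$ is upper semicontinuous at $0$.
   Context: Standing assumptions: $f:\mathbb{R}^n\to\mathbb{R}\cup\{\pm\infty\}$ is proper (never $-\infty$ and finite at some point) and lower semicontinuous; $X\subset\mathbb{R}^n$ is a nonempty closed set with $\operatorname{dom}f\cap X$ unbounded. $f$ is $\alpha$-robustly quasiconvex ($\alpha\ge0$) if $x\mapsto f(x)+\langle u,x\rangle$ is quasiconvex for every $u\in\mathbb{B}_\alpha$, where $g$ quasiconvex means $g(\lambda x+(1-\lambda)y)\le\max\{g(x),g(y)\}$ for $x,y\in\operatorname{dom}g$, $\lambda\in[0,1]$; $\mathbb{B}_\alpha$ is the open ball of radius $\alpha$ centered at $0$. $X^\infty=\{u:\exists t_k\to+\infty,\ \exists x_k\in X,\ x_k/t_k\to u\}$. $f^\infty_q(u)=\sup_{x\in\operatorname{dom}f}\sup_{t>0}\frac{f(x+tu)-f(x)}{t}$, $\mathcal{K}_q(f)=\{d: f^\infty_q(d)\le0\}$. $f_u(x)=f(x)-\langle u,x\rangle$, $\mathrm{Sol}(u)=\{x\in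 X: f_u(x)\le f_u(y)\ \forall y\in X\}$. $\operatorname{Lim\,sup}_{u\to0}\mathrm{Sol}(u)$ is the set of $\bar x$ for which there exist $u_k\to0$, $x_k\in\mathrm{Sol}(u_k)$, $x_k\to\bar x$. A set-valued map $F$ is upper semicontinuous at $\bar u$ if for every open $V\supset F(\bar u)$ there is a neighborhood $U$ of $\bar u$ with $F(u)\subset V$ for all $u\in U$. *)

theory Defs
  imports "HOL-Analysis.Analysis"
begin

definition edom :: "('a \<Rightarrow> ereal) \<Rightarrow> 'a set" where
  "edom f = {x. f x < \<infinity>}"

definition proper_fun :: "('a \<Rightarrow> ereal) \<Rightarrow> bool" where
  "proper_fun f \<longleftrightarrow> (\<forall>x. f x \<noteq> -\<infinity>) \<and> (\<exists>x. f x \<noteq> \<infinity>)"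

definition lsc_fun :: "('a::topological_space \<Rightarrow> ereal) \<Rightarrow> bool" where
  "lsc_fun f \<longleftrightarrow> (\<forall>x. f x \<le> Liminf (at x) f)"

definition quasiconvex_fun :: "('a::real_vector \<Rightarrow> ereal) \<Rightarrow> bool" where
  "quasiconvex_fun g \<longleftrightarrow>
     (\<forall>x\<in>edom g. \<forall>y\<in>edom g. \<forall>l::real. 0 \<le> l \<and> l \<le> 1 \<longrightarrow>
        g (l *\<^sub>R x + (1 - l) *\<^sub>R y) \<le> max (g x) (g y))"

definition robustly_quasiconvex :: "real \<Rightarrow> ('a::real_inner \<Rightarrow> ereal) \<Rightarrow> bool" where
  "robustly_quasiconvex \<alpha> f \<longleftrightarrow>
     (\<forall>u. norm u < \<alpha> \<longrightarrow> quasiconvex_fun (\<lambda>x. f x + ereal (inner u x)))"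

definition asymptotic_cone :: "'a::real_normed_vector set \<Rightarrow> 'a set" where
  "asymptotic_cone X = {u. \<exists>t x. filterlim t at_top sequentially \<and> (\<forall>k. x k \<in> X) \<and>
                              ((\<lambda>k. (1 / t k) *\<^sub>R x k) \<longlongrightarrow> u) sequentially}"

definition q_asymptotic :: "('a::real_vector \<Rightarrow> ereal) \<Rightarrow> 'a \<Rightarrow> ereal" where
  "q_asymptotic f u = (SUP x\<in>edom f. SUP t\<in>{0<..}. (f (x + t *\<^sub>R u) - f x) / ereal t)"

definition Kq :: "('a::real_vector \<Rightarrow> ereal) \<Rightarrow> 'a set" where
  "Kq f = {d. q_asymptotic f d \<le> 0}"

definition tilt :: "('a::real_inner \<Rightarrow> ereal) \<Rightarrow> 'a \<Rightarrow> 'a \<Rightarrow> ereal" where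
  "tilt f u x = f x - ereal (inner u x)"

definition Sol :: "('a::real_inner \<Rightarrow> ereal) \<Rightarrow> 'a set \<Rightarrow> 'a \<Rightarrow> 'a set" where
  "Sol f X u = {x\<in>X. \<forall>y\<in>X. tilt f u x \<le> tilt f u y}"

end

theory Submission
  imports Defs
begin

lemma fin: assumes "proper_fun f" "x \<in> edom f" shows "f x = ereal (real_of_ereal (f x))"
  using assms unfolding proper_fun_def edom_def by (cases "f x") auto

lemma tilt_eq: assumes "proper_fun f" "x \<in> edom f"
  shows "tilt f u x = ereal (real_of_ereal (f x) - inner u x)"
  unfolding tilt_def by (subst fin[OF assms]) simp

lemma qc_real:
  assumes rob: "robustly_quasiconvex \<alpha> f" and pr: "proper_fun f" and u: "norm u < \<alpha>"
    and x: "x \<in> edom f" and y: "y \<in> edom f" and l: "0 \<le> l" "l \<le> 1"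
  shows "l *\<^sub>R x + (1-l) *\<^sub>R y \<in> edom f \<and>
    real_of_ereal (f (l *\<^sub>R x + (1-l) *\<^sub>R y)) - inner u (l *\<^sub>R x + (1-l) *\<^sub>R y)
      \<le> max (real_of_ereal (f x) - inner u x) (real_of_ereal (f y) - inner u y)"
proof -
  let ?g = "\<lambda>z. f z + ereal (inner (-u) z)"
  let ?p = "l *\<^sub>R x + (1-l) *\<^sub>R y"
  have "norm (-u) < \<alpha>" using u by simp
  then have q: "quasiconvex_fun ?g" using rob unfolding robustly_quasiconvex_def by blast
  have gx: "?g x = ereal (real_of_ereal (f x) - inner u x)"
    by (subst fin[OF pr x]) simp
  have gy: "?g y = ereal (real_of_ereal (f y) - inner u y)"
    by (subst fin[OF pr y]) simp
  have "x \<in> edom ?g" "y \<in> edom ?g" using gx gy unfolding edom_def by auto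
  then have le: "?g ?p \<le> max (?g x) (?g y)" using q l unfolding quasiconvex_fun_def by blast
  have nm: "f ?p \<noteq> -\<infinity>" using pr unfolding proper_fun_def by auto
  show ?thesis
  proof (cases "f ?p")
    case (real r)
    then show ?thesis using le gx gy unfolding edom_def by (auto simp: max_def split: if_splits)
  next
    case PInf
    then show ?thesis using le gx gy by (auto simp: max_def split: if_splits)
  next
    case MInf then show ?thesis using nm by simp
  qed
qed

lemma lsc_nbhd: assumes "lsc_fun f" "y < f x" shows "\<exists>U. open U \<and> x \<in> U \<and> (\<forall>z\<in>U. y < f z)"
proof -
  have "y < Liminf (at x) f" using assms unfolding lsc_fun_def by (meson less_le_trans)
  then have "eventually (\<lambda>z. y < f z) (at x)" by (rule less_LiminfD)
  then obtain S where "open S" "x \<in> S" "\<forall>z\<in>S. z \<noteq> x \<longrightarrow> y < f z"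
    unfolding eventually_at_topological by blast
  then show ?thesis using assms(2) by (intro exI[of _ S]) auto
qed

lemma lsc_seq:
  assumes "lsc_fun f" "xk \<longlonglongrightarrow> x" "eventually (\<lambda>k. f (xk k) \<le> ereal (b k)) sequentially"
    "b \<longlonglongrightarrow> \<beta>"
  shows "f x \<le> ereal \<beta>"
proof (rule ccontr)
  assume "\<not> f x \<le> ereal \<beta>"
  then have "ereal \<beta> < f x" by simp
  then obtain c where c: "ereal \<beta> < ereal c" "ereal c < f x" using ereal_dense2 by blast
  obtain U where U: "open U" "x \<in> U" "\<forall>z\<in>U. ereal c < f z" using lsc_nbhd[OF assms(1) c(2)] by blast
  have e1: "eventually (\<lambda>k. xk k \<in> U) sequentially" using U assms(2) topological_tendstoD by blast
  have e2: "eventually (\<lambda>k. b k < c) sequentially" using c(1) assms(4) order_tendstoD(2) by auto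
  have "eventually (\<lambda>k. False) sequentially"
    using e1 e2 assms(3)
  proof eventually_elim
    case (elim k)
    then have "ereal c < ereal (b k)" using U(3) order_less_le_trans by blast
    then show False using elim by simp
  qed
  then show False by simp
qed

lemma min_lemma:
  fixes g :: "'a::topological_space \<Rightarrow> real"
  assumes "compact K" "K \<noteq> {}"
    and lsc: "\<And>x y. x \<in> K \<Longrightarrow> y < g x \<Longrightarrow> \<exists>U. open U \<and> x \<in> U \<and> (\<forall>z\<in>U\<inter>K. y < g z)"
  shows "\<exists>x\<in>K. \<forall>z\<in>K. g x \<le> g z"
proof (rule ccontr)
  assume "\<not> ?thesis"
  then have "\<forall>x\<in>K. \<exists>z\<in>K. g z < g x" by (auto simp: not_le)
  then obtain zf where zf: "\<And>x. x \<in> K \<Longrightarrow> zf x \<in> K \<and> g (zf x) < g x" by metis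
  have "\<forall>x\<in>K. \<exists>U. open U \<and> x \<in> U \<and> (\<forall>z\<in>U\<inter>K. g (zf x) < g z)" using zf lsc by blast
  then obtain Uf where Uf: "\<And>x. x \<in> K \<Longrightarrow> open (Uf x) \<and> x \<in> Uf x \<and> (\<forall>z\<in>Uf x\<inter>K. g (zf x) < g z)"
    by metis
  obtain C where C: "C \<subseteq> K" "finite C" "K \<subseteq> (\<Union>c\<in>C. Uf c)"
    using compactE_image[OF assms(1), of K Uf] Uf by blast
  have "C \<noteq> {}" using C(3) assms(2) by auto
  define m where "m = Min ((\<lambda>c. g (zf c)) ` C)"
  have "m \<in> (\<lambda>c. g (zf c)) ` C" unfolding m_def using C `C \<noteq> {}` by (intro Min_in) auto
  then obtain j where j: "j \<in> C" "m = g (zf j)" by auto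
  have "zf j \<in> K" using zf j C by auto
  then obtain i where i: "i \<in> C" "zf j \<in> Uf i" using C(3) by auto
  then have "g (zf i) < g (zf j)" using Uf[of i] C `zf j \<in> K` by auto
  moreover have "m \<le> g (zf i)" unfolding m_def using C i by (intro Min_le) auto
  ultimately show False using j by simp
qed

lemma kq_of:
  assumes pr: "proper_fun f" and H: "\<And>x t. x \<in> edom f \<Longrightarrow> t > 0 \<Longrightarrow> f (x + t *\<^sub>R d) \<le> f x"
  shows "d \<in> Kq f"
  unfolding Kq_def q_asymptotic_def
proof (intro CollectI SUP_least)
  fix x t assume x: "x \<in> edom f" and t: "t \<in> {0::real<..}"
  have le: "f (x + t *\<^sub>R d) \<le> ereal (real_of_ereal (f x))" using H x t fin[OF pr x] by auto
  have nm: "f (x + t *\<^sub>R d) \<noteq> -\<infinity>" using pr unfolding proper_fun_def by auto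
  then obtain r where r: "f (x + t *\<^sub>R d) = ereal r" using le by (cases "f (x + t *\<^sub>R d)") auto
  have "r \<le> real_of_ereal (f x)" using le r by simp
  then have "(r - real_of_ereal (f x)) / t \<le> 0" using t by (simp add: divide_le_0_iff)
  then show "(f (x + t *\<^sub>R d) - f x) / ereal t \<le> 0"
    using t by (subst fin[OF pr x], simp add: r)
qed

lemma fin_le1: "proper_fun f \<Longrightarrow> f x \<le> ereal M \<Longrightarrow> x \<in> edom f \<and> real_of_ereal (f x) \<le> M"
  unfolding proper_fun_def edom_def by (cases "f x") auto

lemma fin_le2: "proper_fun f \<Longrightarrow> x \<in> edom f \<Longrightarrow> real_of_ereal (f x) \<le> M \<Longrightarrow> f x \<le> ereal M"
  unfolding proper_fun_def edom_def by (cases "f x") auto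

lemma lemA:
  assumes pr: "proper_fun f" and lsc: "lsc_fun f" and rob: "robustly_quasiconvex \<alpha> f"
    and ap: "\<alpha> > 0" and x0: "x0 \<in> edom f"
    and bnd: "\<And>s. s \<ge> 0 \<Longrightarrow> f (x0 + s *\<^sub>R d) \<le> ereal M"
  shows "d \<in> Kq f"
proof (cases "d = 0")
  case True
  then show ?thesis using kq_of[OF pr] by simp
next
  case dnz: False
  have dd: "inner d d > 0" using dnz by simp
  have nd: "norm d > 0" using dnz by simp
  show ?thesis
  proof (rule kq_of[OF pr])
    fix x and t :: real assume x: "x \<in> edom f" and t: "t > 0"
    define a where "a = real_of_ereal (f x)"
    have fx: "f x = ereal a" unfolding a_def using fin[OF pr x] .
    have main: "f (x + t *\<^sub>R d) \<le> ereal (a + c * t * inner d d)" if c: "c > 0" "c * norm d < \<alpha>" for c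
    proof -
      define v where "v = c *\<^sub>R d"
      have nv: "norm v < \<alpha>" using c unfolding v_def by simp
      define s where "s n = t + real n" for n
      define lam where "lam n = t / s n" for n
      define y where "y n = x0 + s n *\<^sub>R d" for n
      define p where "p n = (1 - lam n) *\<^sub>R x + (1 - (1 - lam n)) *\<^sub>R y n" for n
      have sp: "s n > 0" for n unfolding s_def using t by simp
      have lam01: "0 \<le> 1 - lam n" "1 - lam n \<le> 1" for n
        unfolding lam_def s_def using t by (auto simp: field_simps)
      have yM: "f (y n) \<le> ereal M" for n using bnd[of "s n"] sp[of n] unfolding y_def by simp
      have yd: "y n \<in> edom f" and Fy: "real_of_ereal (f (y n)) \<le> M" for n
        using fin_le1[OF pr yM[of n]] by auto
      define K where "K = c * inner d d"
      have Kp: "K > 0" unfolding K_def using c dd by simp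
      obtain N :: nat where N: "real N > (M - inner v x0 - a + inner v x) / K"
        using reals_Archimedean2 by blast
      have ev: "eventually (\<lambda>n. f (p n) \<le> ereal (a - inner v x + inner v (p n))) sequentially"
        unfolding eventually_sequentially
      proof (intro exI allI impI)
        fix n assume n: "n \<ge> N"
        have "inner v (y n) = inner v x0 + s n * K" unfolding y_def K_def v_def by (simp add: inner_add_right)
        moreover have "s n * K \<ge> real N * K" unfolding s_def using n t Kp
          by (intro mult_right_mono) auto
        moreover have "real N * K > M - inner v x0 - a + inner v x" using N Kp by (simp add: field_simps)
        ultimately have lt: "real_of_ereal (f (y n)) - inner v (y n) < a - inner v x"
          using Fy[of n] by linarith
        have q: "p n \<in> edom f \<and> real_of_ereal (f (p n)) - inner v (p n) \<le> max (real_of_ereal (f x) - inner v x) (real_of_ereal (f (y n)) - inner v (y n))"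
          unfolding p_def using qc_real[OF rob pr nv x yd[of n] lam01] .
        then have "real_of_ereal (f (p n)) \<le> a - inner v x + inner v (p n)"
          using lt unfolding a_def by (simp add: max_def split: if_splits)
        then show "f (p n) \<le> ereal (a - inner v x + inner v (p n))"
          using fin_le2[OF pr conjunct1[OF q]] by blast
      qed
      have lam0: "lam \<longlonglongrightarrow> 0" unfolding lam_def s_def
        by (intro tendsto_divide_0[OF tendsto_const] filterlim_at_top_imp_at_infinity
            filterlim_tendsto_add_at_top[OF tendsto_const] filterlim_real_sequentially)
      have peq: "p n = x + t *\<^sub>R d + lam n *\<^sub>R (x0 - x)" for n
      proof -
        have "lam n * s n = t" unfolding lam_def using sp[of n] by simp
        then show ?thesis unfolding p_def y_def by (simp add: algebra_simps scaleR_add_right)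
      qed
      have plim: "p \<longlonglongrightarrow> x + t *\<^sub>R d"
      proof -
        have "(\<lambda>n. x + t *\<^sub>R d + lam n *\<^sub>R (x0 - x)) \<longlonglongrightarrow> x + t *\<^sub>R d + 0 *\<^sub>R (x0 - x)"
          by (intro tendsto_intros lam0)
        then show ?thesis unfolding peq by simp
      qed
      have blim: "(\<lambda>n. a - inner v x + inner v (p n)) \<longlonglongrightarrow> a - inner v x + inner v (x + t *\<^sub>R d)"
        by (intro tendsto_intros plim)
      have "f (x + t *\<^sub>R d) \<le> ereal (a - inner v x + inner v (x + t *\<^sub>R d))"
        by (rule lsc_seq[OF lsc plim ev blim])
      moreover have "a - inner v x + inner v (x + t *\<^sub>R d) = a + c * t * inner d d"
        unfolding v_def by (simp add: inner_add_right)
      ultimately show ?thesis by simp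
    qed
    define c0 where "c0 = \<alpha> / (2 * norm d)"
    have c0: "c0 > 0" "c0 * norm d < \<alpha>" unfolding c0_def using ap nd by (auto simp: field_simps)
    have le0: "f (x + t *\<^sub>R d) \<le> ereal (a + c0 * t * inner d d)" using main c0 .
    have nm: "f (x + t *\<^sub>R d) \<noteq> -\<infinity>" using pr unfolding proper_fun_def by auto
    then obtain r where r: "f (x + t *\<^sub>R d) = ereal r" using le0 by (cases "f (x + t *\<^sub>R d)") auto
    have "r \<le> a"
    proof (rule field_le_epsilon)
      fix e :: real assume e: "e > 0"
      define c where "c = min (e / (t * inner d d)) c0"
      have cp: "c > 0" unfolding c_def using e t dd c0 by simp
      have "c \<le> c0" unfolding c_def by simp
      then have "c * norm d \<le> c0 * norm d" by (rule mult_right_mono) simp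
      then have cn: "c * norm d < \<alpha>" using c0 by linarith
      have "c * t * inner d d \<le> e / (t * inner d d) * (t * inner d d)"
      proof -
        have "c \<le> e / (t * inner d d)" unfolding c_def by simp
        then have "c * (t * inner d d) \<le> e / (t * inner d d) * (t * inner d d)"
          by (rule mult_right_mono) (use t dd in simp)
        then show ?thesis by (simp add: mult.assoc)
      qed
      also have "\<dots> = e" using t dd by simp
      finally have "c * t * inner d d \<le> e" .
      moreover have "r \<le> a + c * t * inner d d" using main[OF cp cn] r by simp
      ultimately show "r \<le> a + e" by linarith
    qed
    then show "f (x + t *\<^sub>R d) \<le> f x" using r fx by simp
  qed
qed

lemma Sol_limit:
  assumes pr: "proper_fun f" and lsc: "lsc_fun f" and cl: "closed X" and Xd: "X \<subseteq> edom f"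
    and ul: "uk \<longlonglongrightarrow> u" and xs: "\<forall>k. xk k \<in> Sol f X (uk k)" and xl: "xk \<longlonglongrightarrow> x"
  shows "x \<in> Sol f X u"
proof -
  have xkX: "xk k \<in> X" for k using xs unfolding Sol_def by auto
  have xX: "x \<in> X" using closed_sequentially[OF cl _ xl] xkX by blast
  have "tilt f u x \<le> tilt f u y" if y: "y \<in> X" for y
  proof -
    have le: "real_of_ereal (f (xk k)) \<le> real_of_ereal (f y) - inner (uk k) y + inner (uk k) (xk k)" for k
    proof -
      have a1: "xk k \<in> edom f" "y \<in> edom f" using xkX[of k] y Xd by auto
      have "tilt f (uk k) (xk k) \<le> tilt f (uk k) y" using xs y unfolding Sol_def by auto
      then show ?thesis unfolding tilt_eq[OF pr a1(1)] tilt_eq[OF pr a1(2)] by simp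
    qed
    have ev: "eventually (\<lambda>k. f (xk k) \<le> ereal (real_of_ereal (f y) - inner (uk k) y + inner (uk k) (xk k))) sequentially"
    proof (intro always_eventually allI)
      fix k
      have "xk k \<in> edom f" using xkX[of k] Xd by auto
      then show "f (xk k) \<le> ereal (real_of_ereal (f y) - inner (uk k) y + inner (uk k) (xk k))"
        using fin_le2[OF pr _ le] by blast
    qed
    have bl: "(\<lambda>k. real_of_ereal (f y) - inner (uk k) y + inner (uk k) (xk k)) \<longlonglongrightarrow> real_of_ereal (f y) - inner u y + inner u x"
      by (intro tendsto_intros ul xl)
    have fxb: "f x \<le> ereal (real_of_ereal (f y) - inner u y + inner u x)" by (rule lsc_seq[OF lsc xl ev bl])
    have "real_of_ereal (f x) \<le> real_of_ereal (f y) - inner u y + inner u x" using fin_le1[OF pr fxb] by blast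
    moreover have a2: "x \<in> edom f" "y \<in> edom f" using xX y Xd by auto
    ultimately show ?thesis unfolding tilt_eq[OF pr a2(1)] tilt_eq[OF pr a2(2)] by simp
  qed
  then show ?thesis using xX unfolding Sol_def by auto
qed

lemma coerc:
  fixes f :: "'a::euclidean_space \<Rightarrow> ereal"
  assumes pr: "proper_fun f" and lsc: "lsc_fun f" and rob: "robustly_quasiconvex \<alpha> f"
    and ap: "\<alpha> > 0" and Xd: "X \<subseteq> edom f" and x0: "x0 \<in> X"
    and cone: "asymptotic_cone X \<inter> Kq f = {0}"
  shows "\<exists>\<epsilon>>0. \<exists>R. \<forall>u x. norm u < \<epsilon> \<longrightarrow> x \<in> X \<longrightarrow> tilt f u x \<le> tilt f u x0 \<longrightarrow> norm x \<le> R"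
proof (rule ccontr)
  assume "\<not> ?thesis"
  then have H: "\<forall>\<epsilon>>0. \<forall>R. \<exists>u x. norm u < \<epsilon> \<and> x \<in> X \<and> tilt f u x \<le> tilt f u x0 \<and> norm x > R"
    by (auto simp: not_le)
  have "\<forall>k::nat. \<exists>p. norm (fst p) < \<alpha> / real (Suc k) \<and> snd p \<in> X \<and> tilt f (fst p) (snd p) \<le> tilt f (fst p) x0 \<and> norm (snd p) > norm x0 + real (Suc k)"
  proof
    fix k :: nat
    have "\<alpha> / real (Suc k) > 0" using ap by simp
    then obtain u x where "norm u < \<alpha> / real (Suc k) \<and> x \<in> X \<and> tilt f u x \<le> tilt f u x0 \<and> norm x > norm x0 + real (Suc k)"
      using H by blast
    then show "\<exists>p. norm (fst p) < \<alpha> / real (Suc k) \<and> snd p \<in> X \<and> tilt f (fst p) (snd p) \<le> tilt f (fst p) x0 \<and> norm (snd p) > norm x0 + real (Suc k)"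
      by (intro exI[of _ "(u, x)"]) simp
  qed
  then obtain g where g: "\<forall>k. norm (fst (g k)) < \<alpha> / real (Suc k) \<and> snd (g k) \<in> X \<and> tilt f (fst (g k)) (snd (g k)) \<le> tilt f (fst (g k)) x0 \<and> norm (snd (g k)) > norm x0 + real (Suc k)"
    by (rule choice[THEN exE]) blast
  define uk where "uk k = fst (g k)" for k
  define xk where "xk k = snd (g k)" for k
  have uk: "\<And>k. norm (uk k) < \<alpha> / real (Suc k)" and xkX: "\<And>k. xk k \<in> X"
    and tl: "\<And>k. tilt f (uk k) (xk k) \<le> tilt f (uk k) x0" and nx: "\<And>k. norm (xk k) > norm x0 + real (Suc k)"
    using g unfolding uk_def xk_def by auto
  have ua: "norm (uk k) < \<alpha>" for k
  proof -
    have "\<alpha> / real (Suc k) \<le> \<alpha>" using ap by (simp add: divide_le_eq)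
    then show ?thesis using uk[of k] by linarith
  qed
  have ul: "uk \<longlonglongrightarrow> 0"
  proof (rule Lim_null_comparison)
    show "eventually (\<lambda>k. norm (uk k) \<le> \<alpha> / real (Suc k)) sequentially" by (rule always_eventually) (use uk in \<open>auto intro: less_imp_le\<close>)
    show "(\<lambda>k. \<alpha> / real (Suc k)) \<longlonglongrightarrow> 0" using LIMSEQ_Suc[OF lim_const_over_n[of \<alpha>]] by simp
  qed
  have Tl: "real_of_ereal (f (xk k)) - inner (uk k) (xk k) \<le> real_of_ereal (f x0) - inner (uk k) x0" for k
  proof -
    have a1: "xk k \<in> edom f" "x0 \<in> edom f" using xkX[of k] x0 Xd by auto
    show ?thesis using tl[of k] unfolding tilt_eq[OF pr a1(1)] tilt_eq[OF pr a1(2)] by simp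
  qed
  define r where "r k = norm (xk k - x0)" for k
  have rk: "r k > real (Suc k)" for k
    using nx[of k] norm_triangle_ineq2[of "xk k" x0] unfolding r_def by linarith
  have rp: "r k > 0" for k using rk[of k] by (smt (verit) of_nat_0_le_iff)
  define e where "e k = (1 / r k) *\<^sub>R (xk k - x0)" for k
  have es: "e k \<in> sphere 0 1" for k using rp[of k] unfolding e_def r_def by simp
  have es': "\<forall>n. e n \<in> sphere 0 1" using es by blast
  obtain d \<sigma> where d: "d \<in> sphere 0 1" and sm: "strict_mono \<sigma>" and el: "(e \<circ> \<sigma>) \<longlonglongrightarrow> d"
    using seq_compactE[OF compact_imp_seq_compact[OF compact_sphere] es'] by blast
  have rs: "real k \<le> r (\<sigma> k)" for k
    using rk[of "\<sigma> k"] seq_suble[OF sm, of k] by linarith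
  have rtop: "filterlim (\<lambda>k. r (\<sigma> k)) at_top sequentially"
    by (rule filterlim_at_top_mono[OF filterlim_real_sequentially]) (use rs in auto)
  have inC: "d \<in> asymptotic_cone X"
    unfolding asymptotic_cone_def
  proof (intro CollectI exI conjI allI)
    show "filterlim (\<lambda>k. r (\<sigma> k)) at_top sequentially" by (rule rtop)
    show "xk (\<sigma> k) \<in> X" for k by (rule xkX)
    have eq: "(1 / r (\<sigma> k)) *\<^sub>R xk (\<sigma> k) = e (\<sigma> k) + (1 / r (\<sigma> k)) *\<^sub>R x0" for k
      unfolding e_def by (simp add: algebra_simps)
    have "(\<lambda>k. 1 / r (\<sigma> k)) \<longlonglongrightarrow> 0"
      by (rule tendsto_divide_0[OF tendsto_const filterlim_at_top_imp_at_infinity[OF rtop]])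
    then have "(\<lambda>k. e (\<sigma> k) + (1 / r (\<sigma> k)) *\<^sub>R x0) \<longlonglongrightarrow> d + 0 *\<^sub>R x0"
      using el by (intro tendsto_intros) (auto simp: o_def)
    then show "(\<lambda>k. (1 / r (\<sigma> k)) *\<^sub>R xk (\<sigma> k)) \<longlonglongrightarrow> d" unfolding eq by simp
  qed
  have inK: "d \<in> Kq f"
  proof (rule lemA[OF pr lsc rob ap, where M="real_of_ereal (f x0)"])
    show "x0 \<in> edom f" using x0 Xd by auto
    fix s :: real assume s: "s \<ge> 0"
    define y where "y k = x0 + s *\<^sub>R e (\<sigma> k)" for k
    define b where "b k = real_of_ereal (f x0) + inner (uk (\<sigma> k)) (s *\<^sub>R e (\<sigma> k))" for k
    have yl: "y \<longlonglongrightarrow> x0 + s *\<^sub>R d" unfolding y_def using el by (intro tendsto_intros) (auto simp: o_def)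
    have usl: "(\<lambda>k. uk (\<sigma> k)) \<longlonglongrightarrow> 0" using LIMSEQ_subseq_LIMSEQ[OF ul sm] by (simp add: o_def)
    have bl: "b \<longlonglongrightarrow> real_of_ereal (f x0) + inner 0 (s *\<^sub>R d)" unfolding b_def
      using el usl by (intro tendsto_intros) (auto simp: o_def)
    obtain N :: nat where N: "real N \<ge> s" using real_arch_simple by blast
    have ev: "eventually (\<lambda>k. f (y k) \<le> ereal (b k)) sequentially"
      unfolding eventually_sequentially
    proof (intro exI allI impI)
      fix k assume k: "k \<ge> N"
      let ?r = "r (\<sigma> k)" and ?u = "uk (\<sigma> k)" and ?x = "xk (\<sigma> k)"
      have sr: "s \<le> ?r" using rs[of k] N k by (smt (verit) of_nat_le_iff)
      have rpos: "?r > 0" by (rule rp)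
      define l where "l = 1 - s / ?r"
      have l01: "0 \<le> l" "l \<le> 1" unfolding l_def using sr rpos s by (auto simp: field_simps)
      have peq: "l *\<^sub>R x0 + (1 - l) *\<^sub>R ?x = y k"
        unfolding l_def y_def e_def using rpos by (simp add: algebra_simps)
      have q: "l *\<^sub>R x0 + (1 - l) *\<^sub>R ?x \<in> edom f \<and>
        real_of_ereal (f (l *\<^sub>R x0 + (1 - l) *\<^sub>R ?x)) - inner ?u (l *\<^sub>R x0 + (1 - l) *\<^sub>R ?x)
          \<le> max (real_of_ereal (f x0) - inner ?u x0) (real_of_ereal (f ?x) - inner ?u ?x)"
        by (rule qc_real[OF rob pr ua]) (use x0 Xd xkX l01 in auto)
      then have yd: "y k \<in> edom f" and
        "real_of_ereal (f (y k)) - inner ?u (y k) \<le> real_of_ereal (f x0) - inner ?u x0"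
        using Tl[of "\<sigma> k"] unfolding peq by (auto simp: max_def split: if_splits)
      then have "real_of_ereal (f (y k)) \<le> b k" unfolding b_def y_def by (simp add: inner_add_right)
      then show "f (y k) \<le> ereal (b k)" using fin_le2[OF pr yd] by blast
    qed
    have "f (x0 + s *\<^sub>R d) \<le> ereal (real_of_ereal (f x0) + inner 0 (s *\<^sub>R d))"
      by (rule lsc_seq[OF lsc yl ev bl])
    then show "f (x0 + s *\<^sub>R d) \<le> ereal (real_of_ereal (f x0))" by simp
  qed
  have "d = 0" using inC inK cone by blast
  then show False using d by simp
qed

theorem mainTheorem11:
  fixes f :: "'a::euclidean_space \<Rightarrow> ereal" and X :: "'a set" and \<alpha> :: real
  assumes "proper_fun f" and "lsc_fun f"
    and "closed X" and "X \<noteq> {}" and "\<not> bounded (edom f \<inter> X)"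
    and "convex X"
    and "\<alpha> > 0" and "robustly_quasiconvex \<alpha> f"
    and "X \<subseteq> edom f"
    and "asymptotic_cone X \<inter> Kq f = {0}"
  shows "(\<exists>\<epsilon>>0. \<forall>u. norm u < \<epsilon> \<longrightarrow>
            (\<exists>m::real. \<forall>x\<in>X. ereal m \<le> tilt f u x) \<and>
            Sol f X u \<noteq> {} \<and> compact (Sol f X u)) \<and>
         (\<forall>xb uk xk. (uk \<longlongrightarrow> 0) sequentially \<and> (\<forall>k. xk k \<in> Sol f X (uk k)) \<and>
            (xk \<longlongrightarrow> xb) sequentially \<longrightarrow> xb \<in> Sol f X 0) \<and>
         (\<forall>V. open V \<and> Sol f X 0 \<subseteq> V \<longrightarrow>
            (\<exists>\<delta>>0. \<forall>u. norm u < \<delta> \<longrightarrow> Sol f X u \<subseteq> V))"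
proof -
  note pr = assms(1) and lsc = assms(2) and cl = assms(3) and Xd = assms(9)
  obtain x0 where x0: "x0 \<in> X" using assms(4) by blast
  obtain \<epsilon> R where ep: "\<epsilon> > 0" and R: "\<And>u x. norm u < \<epsilon> \<Longrightarrow> x \<in> X \<Longrightarrow> tilt f u x \<le> tilt f u x0 \<Longrightarrow> norm x \<le> R"
    using coerc[OF pr lsc assms(8) assms(7) Xd x0 assms(10)] by blast
  have SolR: "norm x \<le> R" if "norm u < \<epsilon>" "x \<in> Sol f X u" for u x
    using R[OF that(1)] that(2) x0 unfolding Sol_def by blast
  have closedSol: "closed (Sol f X u)" for u
    unfolding closed_sequential_limits
  proof (intro allI impI)
    fix xs l assume "(\<forall>n. xs n \<in> Sol f X u) \<and> xs \<longlonglongrightarrow> l"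
    then show "l \<in> Sol f X u" using Sol_limit[OF pr lsc cl Xd, of "\<lambda>_. u" u xs l] by auto
  qed
  have A: "(\<exists>m::real. \<forall>x\<in>X. ereal m \<le> tilt f u x) \<and> Sol f X u \<noteq> {} \<and> compact (Sol f X u)"
    if u: "norm u < \<epsilon>" for u
  proof -
    define K where "K = X \<inter> cball 0 R"
    define g where "g z = real_of_ereal (f z) - inner u z" for z
    have Kc: "compact K" unfolding K_def by (intro closed_Int_compact cl compact_cball)
    have x0K: "x0 \<in> K" unfolding K_def using R[OF u x0] x0 by auto
    have "\<exists>z\<in>K. \<forall>w\<in>K. g z \<le> g w"
    proof (rule min_lemma[OF Kc])
      show "K \<noteq> {}" using x0K by blast
      fix x y assume xK: "x \<in> K" and y: "y < g x"
      have xd: "x \<in> edom f" using xK Xd unfolding K_def by auto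
      define c where "c = (y + inner u x + real_of_ereal (f x)) / 2"
      have "ereal c < f x" using y unfolding c_def g_def by (subst fin[OF pr xd]) simp
      then obtain U where U: "open U" "x \<in> U" "\<forall>z\<in>U. ereal c < f z" using lsc_nbhd[OF lsc] by blast
      let ?W = "U \<inter> {z. inner u z < c - y}"
      have "open ?W" using U(1) open_halfspace_lt by blast
      moreover have "x \<in> ?W" using U(2) y unfolding c_def g_def by (auto simp: field_simps)
      moreover have "y < g z" if z: "z \<in> ?W \<inter> K" for z
      proof -
        have zd: "z \<in> edom f" using z Xd unfolding K_def by auto
        have "ereal c < f z" using U(3) z by blast
        then have "c < real_of_ereal (f z)" using zd pr unfolding edom_def proper_fun_def by (cases "f z") auto
        then show ?thesis using z unfolding g_def by auto
      qed
      ultimately show "\<exists>U. open U \<and> x \<in> U \<and> (\<forall>z\<in>U \<inter> K. y < g z)" by blast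
    qed
    then obtain z where zK: "z \<in> K" and zmin: "\<And>w. w \<in> K \<Longrightarrow> g z \<le> g w" by blast
    have teq: "tilt f u w = ereal (g w)" if "w \<in> X" for w
      unfolding g_def using tilt_eq[OF pr] that Xd by blast
    have zall: "g z \<le> g w" if w: "w \<in> X" for w
    proof (cases "norm w \<le> R")
      case True then show ?thesis using zmin w unfolding K_def by auto
    next
      case False
      then have "\<not> tilt f u w \<le> tilt f u x0" using R[OF u w] by blast
      then have "g x0 < g w" using teq[OF w] teq[OF x0] by simp
      moreover have "g z \<le> g x0" using zmin[OF x0K] .
      ultimately show ?thesis by simp
    qed
    have zX: "z \<in> X" using zK unfolding K_def by auto
    have zS: "z \<in> Sol f X u" unfolding Sol_def using zX zall teq by auto
    have "\<forall>x\<in>X. ereal (g z) \<le> tilt f u x" using zall teq by simp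
    moreover have "compact (Sol f X u)"
    proof -
      have "Sol f X u \<subseteq> cball 0 R" using SolR[OF u] by auto
      then have "bounded (Sol f X u)" using bounded_cball bounded_subset by blast
      then show ?thesis using closedSol compact_eq_bounded_closed by blast
    qed
    ultimately show ?thesis using zS by blast
  qed
  have C: "\<forall>xb uk xk. (uk \<longlonglongrightarrow> 0) \<and> (\<forall>k. xk k \<in> Sol f X (uk k)) \<and> (xk \<longlonglongrightarrow> xb) \<longrightarrow> xb \<in> Sol f X 0"
    using Sol_limit[OF pr lsc cl Xd] by blast
  have D: "\<exists>\<delta>>0. \<forall>u. norm u < \<delta> \<longrightarrow> Sol f X u \<subseteq> V" if V: "open V" "Sol f X 0 \<subseteq> V" for V
  proof (rule ccontr)
    assume nD: "\<not> ?thesis"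
    have "\<forall>k::nat. \<exists>p. norm (fst p) < min \<epsilon> (1 / real (Suc k)) \<and> snd p \<in> Sol f X (fst p) \<and> snd p \<notin> V"
    proof
      fix k :: nat
      have "min \<epsilon> (1 / real (Suc k)) > 0" using ep by simp
      then obtain u x where "norm u < min \<epsilon> (1 / real (Suc k))" "x \<in> Sol f X u" "x \<notin> V"
        using nD by blast
      then show "\<exists>p. norm (fst p) < min \<epsilon> (1 / real (Suc k)) \<and> snd p \<in> Sol f X (fst p) \<and> snd p \<notin> V"
        by (intro exI[of _ "(u, x)"]) simp
    qed
    then obtain h where h: "\<forall>k. norm (fst (h k)) < min \<epsilon> (1 / real (Suc k)) \<and> snd (h k) \<in> Sol f X (fst (h k)) \<and> snd (h k) \<notin> V"
      by (rule choice[THEN exE]) blast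
    define uk where "uk k = fst (h k)" for k
    define xk where "xk k = snd (h k)" for k
    have uk: "norm (uk k) < \<epsilon>" "norm (uk k) < 1 / real (Suc k)" and xkS: "xk k \<in> Sol f X (uk k)"
      and xkV: "xk k \<notin> V" for k using h unfolding uk_def xk_def by auto
    have xkb: "\<forall>k. xk k \<in> cball 0 R" using SolR[OF uk(1) xkS] by simp
    obtain xb \<sigma> where sm: "strict_mono \<sigma>" and xl: "(xk \<circ> \<sigma>) \<longlonglongrightarrow> xb"
      using seq_compactE[OF compact_imp_seq_compact[OF compact_cball] xkb] by blast
    have ul: "uk \<longlonglongrightarrow> 0"
    proof (rule Lim_null_comparison)
      show "eventually (\<lambda>k. norm (uk k) \<le> 1 / real (Suc k)) sequentially"
        by (rule always_eventually) (use uk(2) in \<open>auto intro: less_imp_le\<close>)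
      show "(\<lambda>k. 1 / real (Suc k)) \<longlonglongrightarrow> 0" using LIMSEQ_Suc[OF lim_const_over_n[of 1]] by simp
    qed
    have "xb \<in> Sol f X 0"
      using Sol_limit[OF pr lsc cl Xd LIMSEQ_subseq_LIMSEQ[OF ul sm], of "xk \<circ> \<sigma>" xb] xl xkS by auto
    then have "xb \<in> V" using V by blast
    then have "eventually (\<lambda>k. (xk \<circ> \<sigma>) k \<in> V) sequentially" using V(1) xl topological_tendstoD by blast
    then show False using xkV by simp
  qed
  show ?thesis using A ep C D by blast
qed

end
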